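(* Let $p$ be an SCF that is rationalizable within the class of symmetric RUMs, and let $x,y\in X$. If $(x,y)\in T(R^s)$, then every symmetric RUM $(u,g)$ rationalizing $p$ satisfies $u(x)\geq u(y)$. If $(x,y)\in T_P(R^s)$, then every such model satisfies $u(x)>u(y)$.
   Context: $X$ is a finite set of options; $C=\{(x,y): x,y\in X,\ x\neq y\}$; $D\subseteq C$ is a fixed non-empty set with $(x,y)\in D\Rightarrow (y,x)\in D$. An SCF $p$ assigns to each $(x,y)\in D$ a number $p(x,y)>0$ with $p(x,y)+p(y,x)=1$. A RUM is a pair $(u,g)$ with $u:X\to\mathbb{R}$ and $g$ assigning to each $(x,y)\in C$ a density $g(x,y)$ on $\mathbb{R}$ (cdf $G(x,y)$) with $\int v\,g(x,y)(v)\,dv=u(x)-u(y)=:v(x,y)$, $g(x,y)(v)=g(y,x)(-v)$ for all $v$, and connected support. A RUM rationalizes $p$ if $G(x,y)(0)=p(y,x)$ for all $(x,y)\in D$. A RUM is symmetric if $g(x,y)(v(x,y)+\delta)=g(x,y)(v(x,y)-\delta)$ for all $(x,y)\in C$, $\delta\geq0$. The relation $R^s$ on $X$: $(x,y)\in R^s$ iff $x=y$, or $(x,y)\in D$ and $p(x,y)\geq p(y,x)$. For a binary relation $R$ on $X$, $T(R)$ is its transitive closure ($(x,y)\in T(R)$ iff there is a sequence $x_1=x,\dots,x_n=y$, $n\geq2$, with $(x_k,x_{k+1})\in R$ for all $k$), and $T_P(R)$ is the asymmetric part of $T(R)$: $(x,y)\in T(R)$ and $(y,x)\notin T(R)$.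 *)

theory Defs
  imports "HOL-Analysis.Analysis"
begin

definition pairs :: "'a set \<Rightarrow> ('a \<times> 'a) set" where
  "pairs X = {(x,y). x \<in> X \<and> y \<in> X \<and> x \<noteq> y}"

text \<open>Standing assumptions on X, D and the SCF p (p only matters on D).\<close>
definition is_SCF :: "'a set \<Rightarrow> ('a \<times> 'a) set \<Rightarrow> ('a \<Rightarrow> 'a \<Rightarrow> real) \<Rightarrow> bool" where
  "is_SCF X D p \<longleftrightarrow> finite X \<and> D \<noteq> {} \<and> D \<subseteq> pairs X \<and>
     (\<forall>x y. (x,y) \<in> D \<longrightarrow> (y,x) \<in> D) \<and>
     (\<forall>x y. (x,y) \<in> D \<longrightarrow> p x y > 0 \<and> p x y + p y x = 1)"

definition cdf_of :: "(real \<Rightarrow> real) \<Rightarrow> real \<Rightarrow> real" where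
  "cdf_of f t = (LINT v:{..t}|lborel. f v)"

text \<open>A density on the reals with finite mean m and connected support
  (support read as the set where the density is positive).\<close>
definition density_with_mean :: "(real \<Rightarrow> real) \<Rightarrow> real \<Rightarrow> bool" where
  "density_with_mean f m \<longleftrightarrow> f \<in> borel_measurable borel \<and> (\<forall>v. f v \<ge> 0) \<and>
     integrable lborel f \<and> (\<integral>v. f v \<partial>lborel) = 1 \<and>
     integrable lborel (\<lambda>v. v * f v) \<and> (\<integral>v. v * f v \<partial>lborel) = m \<and>
     is_interval {v. f v > 0}"

definition is_RUM :: "'a set \<Rightarrow> ('a \<Rightarrow> real) \<Rightarrow> ('a \<Rightarrow> 'a \<Rightarrow> real \<Rightarrow> real) \<Rightarrow> bool" where
  "is_RUM X u g \<longleftrightarrow> (\<forall>(x,y) \<in> pairs X.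
      density_with_mean (g x y) (u x - u y) \<and> (\<forall>v. g x y v = g y x (- v)))"

definition symmetric_RUM :: "'a set \<Rightarrow> ('a \<Rightarrow> real) \<Rightarrow> ('a \<Rightarrow> 'a \<Rightarrow> real \<Rightarrow> real) \<Rightarrow> bool" where
  "symmetric_RUM X u g \<longleftrightarrow> is_RUM X u g \<and> (\<forall>(x,y) \<in> pairs X. \<forall>\<delta>\<ge>0.
      g x y (u x - u y + \<delta>) = g x y (u x - u y - \<delta>))"

definition rationalizes :: "('a \<times> 'a) set \<Rightarrow> ('a \<Rightarrow> 'a \<Rightarrow> real) \<Rightarrow> ('a \<Rightarrow> real) \<Rightarrow> ('a \<Rightarrow> 'a \<Rightarrow> real \<Rightarrow> real) \<Rightarrow> bool" where
  "rationalizes D p u g \<longleftrightarrow> (\<forall>(x,y) \<in> D. cdf_of (g x y) 0 = p y x)"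

definition Rs :: "'a set \<Rightarrow> ('a \<times> 'a) set \<Rightarrow> ('a \<Rightarrow> 'a \<Rightarrow> real) \<Rightarrow> ('a \<times> 'a) set" where
  "Rs X D p = {(x,y). x \<in> X \<and> y \<in> X \<and> (x = y \<or> ((x,y) \<in> D \<and> p x y \<ge> p y x))}"

definition TP :: "('a \<times> 'a) set \<Rightarrow> ('a \<times> 'a) set" where
  "TP R = {(x,y). (x,y) \<in> R\<^sup>+ \<and> (y,x) \<notin> R\<^sup>+}"

end

theory Submission
  imports Defs
begin

lemma cdf_alt: "cdf_of f t = (\<integral>v. indicator {..t} v * f v \<partial>lborel)"
  unfolding cdf_of_def set_lebesgue_integral_def by simp

lemma sym_all:
  fixes f :: "real \<Rightarrow> real"
  assumes s: "\<forall>\<delta>\<ge>0. f (m+\<delta>) = f (m-\<delta>)"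
  shows "f (2*m - v) = f v"
proof (cases "v \<ge> m")
  case True
  then show ?thesis using s[rule_format, of "v - m"] by simp
next
  case False
  then show ?thesis using s[rule_format, of "m - v"] by simp
qed

lemma half:
  fixes f :: "real \<Rightarrow> real"
  assumes d: "density_with_mean f m" and s: "\<forall>\<delta>\<ge>0. f (m+\<delta>) = f (m-\<delta>)"
  shows "cdf_of f m = 1/2"
proof -
  have fm[measurable]: "f \<in> borel_measurable borel" and int: "integrable lborel f"
    and one: "(\<integral>v. f v \<partial>lborel) = 1"
    using d unfolding density_with_mean_def by auto
  have i1: "integrable lborel (\<lambda>v. indicator {..m} v * f v)"
    using integrable_real_mult_indicator[OF _ int, of "{..m}"] by (simp add: mult.commute)
  have i2: "integrable lborel (\<lambda>v. indicator {m<..} v * f v)"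
    using integrable_real_mult_indicator[OF _ int, of "{m<..}"] by (simp add: mult.commute)
  have refl: "(\<integral>v. indicator {..m} v * f v \<partial>lborel) = (\<integral>v. indicator {m..} v * f v \<partial>lborel)"
  proof -
    have "(\<integral>v. indicator {..m} v * f v \<partial>lborel) = abs (- 1) *\<^sub>R (\<integral>v. indicator {..m} (2*m + (- 1) * v) * f (2*m + (- 1) * v) \<partial>lborel)"
      by (rule lborel_integral_real_affine) simp
    also have "\<dots> = (\<integral>v. indicator {m..} v * f v \<partial>lborel)"
      using sym_all[OF s] by (simp, intro Bochner_Integration.integral_cong) (auto split: split_indicator)
    finally show ?thesis .
  qed
  have ae: "(\<integral>v. indicator {m..} v * f v \<partial>lborel) = (\<integral>v. indicator {m<..} v * f v \<partial>lborel)"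
    by (rule integral_cong_AE) (use AE_lborel_singleton[of m] in \<open>auto elim!: eventually_mono split: split_indicator\<close>)
  have "(\<integral>v. indicator {..m} v * f v \<partial>lborel) + (\<integral>v. indicator {m<..} v * f v \<partial>lborel)
      = (\<integral>v. indicator {..m} v * f v + indicator {m<..} v * f v \<partial>lborel)"
    using i1 i2 by simp
  also have "\<dots> = (\<integral>v. f v \<partial>lborel)"
    by (intro Bochner_Integration.integral_cong) (auto split: split_indicator)
  finally show ?thesis using one refl ae by (simp add: cdf_alt)
qed

lemma pos_int:
  fixes f :: "real \<Rightarrow> real"
  assumes [measurable]: "f \<in> borel_measurable borel" and int: "integrable lborel f"
    and nn: "\<forall>v. f v \<ge> 0" and ab: "a < b" and pos: "\<forall>v. a < v \<and> v < b \<longrightarrow> f v > 0"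
  shows "(\<integral>v. indicator {a<..<b} v * f v \<partial>lborel) > 0"
proof -
  have i: "integrable lborel (\<lambda>v. indicator {a<..<b} v * f v)"
    using integrable_real_mult_indicator[OF _ int, of "{a<..<b}"] by (simp add: mult.commute)
  have ge: "(\<integral>v. indicator {a<..<b} v * f v \<partial>lborel) \<ge> 0"
    using nn by (intro Bochner_Integration.integral_nonneg) (auto split: split_indicator)
  moreover have "(\<integral>v. indicator {a<..<b} v * f v \<partial>lborel) \<noteq> 0"
  proof
    assume "(\<integral>v. indicator {a<..<b} v * f v \<partial>lborel) = 0"
    then have "AE v in lborel. indicator {a<..<b} v * f v = 0"
      using integral_nonneg_eq_0_iff_AE[OF i] nn by (auto split: split_indicator)
    then have "AE v in lborel. v \<notin> {a<..<b}"
      by (rule eventually_mono) (use pos in \<open>auto split: split_indicator\<close>)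
    then have "emeasure lborel {a<..<b} = 0"
      by (subst (asm) AE_iff_measurable[of "{a<..<b}"]) auto
    then show False using ab by simp
  qed
  ultimately show ?thesis by linarith
qed

lemma support_nbhd:
  fixes f :: "real \<Rightarrow> real"
  assumes d: "density_with_mean f m" and s: "\<forall>\<delta>\<ge>0. f (m+\<delta>) = f (m-\<delta>)"
  shows "\<exists>e>0. \<forall>v. \<bar>v - m\<bar> < e \<longrightarrow> f v > 0"
proof -
  have fm[measurable]: "f \<in> borel_measurable borel" and nn: "\<forall>v. f v \<ge> 0"
    and one: "(\<integral>v. f v \<partial>lborel) = 1" and iv: "is_interval {v. f v > 0}"
    using d unfolding density_with_mean_def by auto
  obtain a where a: "a \<noteq> m" "f a > 0"
  proof (rule ccontr)
    assume "\<not> thesis"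
    with that have z: "\<forall>v. v \<noteq> m \<longrightarrow> f v = 0" using nn by (metis less_eq_real_def)
    have "(\<integral>v. f v \<partial>lborel) = (\<integral>v. (0::real) \<partial>(lborel::real measure))"
      by (rule integral_cong_AE) (use AE_lborel_singleton[of m] z in \<open>auto elim!: eventually_mono\<close>)
    then show False using one by simp
  qed
  have a2: "f (2*m - a) > 0" using a sym_all[OF s, of a] by simp
  show ?thesis
  proof (intro exI[of _ "\<bar>a - m\<bar>"] conjI allI impI)
    show "\<bar>a - m\<bar> > 0" using a by simp
    fix v assume v: "\<bar>v - m\<bar> < \<bar>a - m\<bar>"
    show "f v > 0"
    proof (cases "a < m")
      case True
      then show ?thesis using iv[unfolded is_interval_1] a a2 v
        by (smt (verit) mem_Collect_eq)
    next
      case False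
      then show ?thesis using iv[unfolded is_interval_1] a a2 v
        by (smt (verit) mem_Collect_eq)
    qed
  qed
qed

lemma sym_cdf:
  fixes f :: "real \<Rightarrow> real"
  assumes d: "density_with_mean f m" and s: "\<forall>\<delta>\<ge>0. f (m+\<delta>) = f (m-\<delta>)"
  shows "(m \<ge> 0 \<longrightarrow> cdf_of f 0 \<le> 1/2) \<and> (m < 0 \<longrightarrow> cdf_of f 0 > 1/2)"
proof -
  have fm[measurable]: "f \<in> borel_measurable borel" and nn: "\<forall>v. f v \<ge> 0"
    and int: "integrable lborel f"
    using d unfolding density_with_mean_def by auto
  have h: "cdf_of f m = 1/2" by (rule half[OF d s])
  have ii: "\<And>A. A \<in> sets borel \<Longrightarrow> integrable lborel (\<lambda>v. indicator A v * f v)"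
    using integrable_real_mult_indicator[OF _ int] by (simp add: mult.commute)
  have "cdf_of f 0 \<le> 1/2" if "m \<ge> 0"
  proof -
    have "cdf_of f 0 \<le> cdf_of f m" unfolding cdf_alt
      using that nn by (intro integral_mono ii) (auto split: split_indicator)
    then show ?thesis using h by simp
  qed
  moreover have "cdf_of f 0 > 1/2" if m0: "m < 0"
  proof -
    obtain e where e: "e > 0" "\<forall>v. \<bar>v - m\<bar> < e \<longrightarrow> f v > 0"
      using support_nbhd[OF d s] by blast
    define c where "c = min 0 (m + e)"
    have mc: "m < c" using e m0 unfolding c_def by simp
    have p: "(\<integral>v. indicator {m<..<c} v * f v \<partial>lborel) > 0"
      by (rule pos_int[OF fm int nn mc]) (use e in \<open>auto simp: c_def\<close>)
    have "cdf_of f 0 \<ge> (\<integral>v. indicator {..m} v * f v + indicator {m<..<c} v * f v \<partial>lborel)"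
      unfolding cdf_alt using nn mc unfolding c_def
      by (intro integral_mono Bochner_Integration.integrable_add ii) (auto split: split_indicator)
    also have "(\<integral>v. indicator {..m} v * f v + indicator {m<..<c} v * f v \<partial>lborel)
       = cdf_of f m + (\<integral>v. indicator {m<..<c} v * f v \<partial>lborel)"
      unfolding cdf_alt by (intro Bochner_Integration.integral_add ii) auto
    finally show ?thesis using h p by simp
  qed
  ultimately show ?thesis by blast
qed

lemma pair_lemma:
  assumes scf: "is_SCF X D p" and sr: "symmetric_RUM X u g" and ra: "rationalizes D p u g"
    and ab: "(a,b) \<in> D"
  shows "(p a b \<ge> p b a \<longrightarrow> u a \<ge> u b) \<and> (u a \<ge> u b \<longrightarrow> p a b \<ge> p b a)"
proof -
  have P: "(a,b) \<in> pairs X" and sum: "p a b + p b a = 1"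
    using scf ab unfolding is_SCF_def by auto
  have d: "density_with_mean (g a b) (u a - u b)"
    using sr P unfolding symmetric_RUM_def is_RUM_def by auto
  have s: "\<forall>\<delta>\<ge>0. g a b (u a - u b + \<delta>) = g a b (u a - u b - \<delta>)"
    using sr P unfolding symmetric_RUM_def by auto
  have c: "cdf_of (g a b) 0 = p b a" using ra ab unfolding rationalizes_def by auto
  show ?thesis using sym_cdf[OF d s] c sum by auto
qed

lemma R_lemma:
  assumes scf: "is_SCF X D p" and sr: "symmetric_RUM X u g" and ra: "rationalizes D p u g"
    and ab: "(a,b) \<in> Rs X D p"
  shows "u a \<ge> u b" and "u b \<ge> u a \<Longrightarrow> (b,a) \<in> Rs X D p"
proof -
  have sD: "\<And>x y. (x,y) \<in> D \<Longrightarrow> (y,x) \<in> D" using scf unfolding is_SCF_def by auto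
  show "u a \<ge> u b"
    using ab pair_lemma[OF scf sr ra, of a b] unfolding Rs_def by auto
  show "(b,a) \<in> Rs X D p" if "u b \<ge> u a"
    using ab that pair_lemma[OF scf sr ra, of b a] sD[of a b] unfolding Rs_def by auto
qed

theorem corollary3:
  fixes X :: "'a set" and D :: "('a \<times> 'a) set" and p :: "'a \<Rightarrow> 'a \<Rightarrow> real"
    and x y :: 'a
  assumes "is_SCF X D p"
    and "\<exists>u g. symmetric_RUM X u g \<and> rationalizes D p u g"
    and "x \<in> X" and "y \<in> X"
  shows "((x,y) \<in> (Rs X D p)\<^sup>+ \<longrightarrow>
            (\<forall>u g. symmetric_RUM X u g \<and> rationalizes D p u g \<longrightarrow> u x \<ge> u y))
       \<and> ((x,y) \<in> TP (Rs X D p) \<longrightarrow>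
            (\<forall>u g. symmetric_RUM X u g \<and> rationalizes D p u g \<longrightarrow> u x > u y))"
proof -
  have mono: "u a \<ge> u b" if "(a,b) \<in> (Rs X D p)\<^sup>+" "symmetric_RUM X u g" "rationalizes D p u g"
    for a b u g
    using that(1)
  proof (induction rule: trancl_induct)
    case (base b) then show ?case using R_lemma(1)[OF assms(1) that(2,3)] by simp
  next
    case (step b c) then show ?case using R_lemma(1)[OF assms(1) that(2,3), of b c] by linarith
  qed
  have bk: "u b \<ge> u a \<longrightarrow> (b,a) \<in> (Rs X D p)\<^sup>+"
    if "(a,b) \<in> (Rs X D p)\<^sup>+" "symmetric_RUM X u g" "rationalizes D p u g"
    for a b u g
    using that(1)
  proof (induction rule: trancl_induct)
    case (base b) then show ?case using R_lemma(2)[OF assms(1) that(2,3), of a b] by auto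
  next
    case (step b c)
    show ?case
    proof
      assume ca: "u c \<ge> u a"
      have "u a \<ge> u b" using mono[OF step(1) that(2,3)] .
      moreover have "u b \<ge> u c" using R_lemma(1)[OF assms(1) that(2,3) step(2)] .
      ultimately have "(b,a) \<in> (Rs X D p)\<^sup>+" "(c,b) \<in> Rs X D p"
        using step(3) ca R_lemma(2)[OF assms(1) that(2,3) step(2)] by auto
      then show "(c,a) \<in> (Rs X D p)\<^sup>+" by auto
    qed
  qed
  show ?thesis
  proof (intro conjI impI allI)
    fix u g assume "(x,y) \<in> (Rs X D p)\<^sup>+" "symmetric_RUM X u g \<and> rationalizes D p u g"
    then show "u x \<ge> u y" using mono[of x y u g] by auto
  next
    fix u g assume tp: "(x,y) \<in> TP (Rs X D p)" and m: "symmetric_RUM X u g \<and> rationalizes D p u g"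
    then have "(x,y) \<in> (Rs X D p)\<^sup>+" "(y,x) \<notin> (Rs X D p)\<^sup>+" unfolding TP_def by auto
    then show "u x > u y" using mono[of x y u g] bk[of x y u g] m by auto
  qed
qed

end
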